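(* Let $G>0$, $a\ge\frac{3\pi G^2}{4}$, $\sigma^2=\pi/2$, and let $(\beta_t)_{t\ge1}$ be positive reals with $\beta_{t+1}\le\beta_t$ for all $t$. For $t\ge1$ define $f_t(x)=\beta_t\exp\big(\frac{x^2}{2at}\big)$. Then for every $t\ge1$, \[ \arg\max_{x\in\mathbb{R}}\ \Big(\mathbb{E}_{\phi\sim N(0,\sigma^2)}\big[f_{t+1}(x+\phi G)\big]-f_t(x)\Big)=0, \] i.e. the maximum over $x$ is attained at $x=0$. *)

theory Defs
  imports "HOL-Probability.Probability"
begin

definition ft :: "real \<Rightarrow> (nat \<Rightarrow> real) \<Rightarrow> nat \<Rightarrow> real \<Rightarrow> real" where
  "ft a \<beta> t x = \<beta> t * exp (x\<^sup>2 / (2 * a * real t))"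

definition gauss_expect :: "real \<Rightarrow> (real \<Rightarrow> real) \<Rightarrow> real" where
  "gauss_expect s h = (\<integral>\<phi>. h \<phi> \<partial>(density lborel (normal_density 0 s)))"

end

theory Submission imports Defs begin

lemma pointwise:
  fixes c G q x \<phi> :: real
  assumes c: "c > 0" and q: "q = 1/pi - c*G^2" "q > 0"
  shows "normal_density 0 (sqrt (pi/2)) \<phi> * exp (c*(x+\<phi>*G)^2)
       = (1/sqrt(pi*q) * exp ((c + c^2*G^2/q) * x^2)) *
         normal_density (c*x*G/q) (sqrt (1/(2*q))) \<phi>"
proof -
  have pi: "pi > 0" by simp
  have L: "normal_density 0 (sqrt (pi/2)) \<phi> = 1/pi * exp (- (\<phi>^2) / pi)"
    unfolding normal_density_def using pi by (simp add: power2_eq_square)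
  have R: "normal_density (c*x*G/q) (sqrt (1/(2*q))) \<phi> = 1/sqrt(pi/q) * exp (-q*(\<phi> - c*x*G/q)^2)"
    unfolding normal_density_def using q by (simp add: field_simps)
  have K: "1/sqrt(pi*q) * (1/sqrt(pi/q)) = 1/pi"
  proof -
    have "sqrt(pi*q) * sqrt(pi/q) = sqrt((pi*q)*(pi/q))" by (rule real_sqrt_mult[symmetric])
    also have "(pi*q)*(pi/q) = pi^2" using q by (simp add: field_simps power2_eq_square)
    finally have S: "sqrt(pi*q) * sqrt(pi/q) = pi" using pi by simp
    have "1/sqrt(pi*q) * (1/sqrt(pi/q)) = 1/(sqrt(pi*q) * sqrt(pi/q))" by simp
    then show ?thesis by (simp only: S)
  qed
  have E: "- (\<phi>^2) / pi + c*(x+\<phi>*G)^2 = (c + c^2*G^2/q) * x^2 + (-q*(\<phi> - c*x*G/q)^2)"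
  proof -
    have ip: "1/pi = q + c*G^2" using q by simp
    have "- (\<phi>^2) / pi = - (\<phi>^2) * (1/pi)" by simp
    also have "\<dots> = - (\<phi>^2) * (q + c*G^2)" by (simp only: ip)
    finally have "- (\<phi>^2) / pi = - (\<phi>^2) * (q + c*G^2)" .
    then have e: "- (\<phi>^2) / pi + c*(x+\<phi>*G)^2 = - (\<phi>^2) * (q + c*G^2) + c*(x+\<phi>*G)^2" by simp
    have "q \<noteq> 0" using q(2) by simp
    then show ?thesis unfolding e by (simp add: field_simps power2_eq_square)
  qed
  have "normal_density 0 (sqrt (pi/2)) \<phi> * exp (c*(x+\<phi>*G)^2) = 1/pi * exp (- (\<phi>^2) / pi + c*(x+\<phi>*G)^2)"
    by (simp only: L exp_add)
  also have "\<dots> = 1/pi * (exp ((c + c^2*G^2/q) * x^2) * exp (-q*(\<phi> - c*x*G/q)^2))"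
    by (simp only: E exp_add)
  also have "\<dots> = (1/sqrt(pi*q) * exp ((c + c^2*G^2/q) * x^2)) *
         normal_density (c*x*G/q) (sqrt (1/(2*q))) \<phi>"
    by (simp only: R K[symmetric]) (simp add: algebra_simps)
  finally show ?thesis .
qed

lemma gauss_closed:
  fixes c G q x :: real
  assumes c: "c > 0" and q: "q = 1/pi - c*G^2" "q > 0"
  shows "gauss_expect (sqrt (pi/2)) (\<lambda>\<phi>. exp (c*(x+\<phi>*G)^2))
       = 1/sqrt(pi*q) * exp ((c + c^2*G^2/q) * x^2)"
proof -
  have "gauss_expect (sqrt (pi/2)) (\<lambda>\<phi>. exp (c*(x+\<phi>*G)^2))
     = (\<integral>\<phi>. normal_density 0 (sqrt (pi/2)) \<phi> *\<^sub>R exp (c*(x+\<phi>*G)^2) \<partial>lborel)"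
    unfolding gauss_expect_def by (rule integral_density) auto
  also have "\<dots> = (\<integral>\<phi>. (1/sqrt(pi*q) * exp ((c + c^2*G^2/q) * x^2)) *
         normal_density (c*x*G/q) (sqrt (1/(2*q))) \<phi> \<partial>lborel)"
    using pointwise[OF c q] by simp
  also have "\<dots> = 1/sqrt(pi*q) * exp ((c + c^2*G^2/q) * x^2)"
    using q by simp
  finally show ?thesis .
qed

lemma exp_dec:
  fixes A B e d u :: real
  assumes "0 < e" "e < d" "0 < A" "A*e \<le> B*d" "u > 0"
  shows "A*exp(e*u) - B*exp(d*u) < A - B"
proof -
  let ?h = "\<lambda>z. B * exp (d * z) - A * exp (e * z)"
  have "?h 0 < ?h u"
  proof (rule DERIV_pos_imp_increasing_open[OF assms(5)])
    fix w :: real assume w: "0 < w" "w < u"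
    have "DERIV ?h w :> B*(exp(d*w)*d) - A*(exp(e*w)*e)"
      by (auto intro!: derivative_eq_intros)
    moreover have "B*(exp(d*w)*d) - A*(exp(e*w)*e) > 0"
    proof -
      have "exp(e*w) < exp(d*w)" using assms w by simp
      moreover have "B*d > 0" using assms by (smt (verit) mult_pos_pos)
      ultimately have "A*e*exp(e*w) < B*d*exp(d*w)"
        using assms by (smt (verit, best) exp_gt_zero mult_le_cancel_right mult_strict_left_mono)
      then show ?thesis by (simp add: algebra_simps)
    qed
    ultimately show "\<exists>y. DERIV ?h w :> y \<and> y > 0" by blast
  next
    show "continuous_on {0..u} ?h" by (intro continuous_intros)
  qed
  then show ?thesis by simp
qed

lemma key_ineq:
  fixes b T P :: real
  assumes "T \<ge> 1" "P > 0" "b \<ge> 3*P/2"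
  shows "b*(T+1)*(b*T)^2 \<le> (b*(T+1) - P)^3"
proof -
  have b: "b > 0" using assms by simp
  have "b*(T+1) - P \<ge> b*(T+1/3)" using assms by (simp add: algebra_simps)
  moreover have "b*(T+1/3) \<ge> 0" using assms b by simp
  ultimately have "(b*(T+1/3))^3 \<le> (b*(T+1) - P)^3" by (simp add: power_mono)
  moreover have "b*(T+1)*(b*T)^2 \<le> (b*(T+1/3))^3"
  proof -
    have "T^2*(T+1) \<le> (T+1/3)^3" using assms by (simp add: power3_eq_cube power2_eq_square field_simps)
    then have "b^3*(T^2*(T+1)) \<le> b^3*(T+1/3)^3" using b by simp
    then show ?thesis by (simp add: power_mult_distrib power3_eq_cube power2_eq_square algebra_simps)
  qed
  ultimately show ?thesis by linarith
qed

theorem lemma17: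
  fixes G a :: real and \<beta> :: "nat \<Rightarrow> real" and t :: nat
  assumes "G > 0"
    and "a \<ge> 3 * pi * G\<^sup>2 / 4"
    and "\<And>s. s \<ge> 1 \<Longrightarrow> \<beta> s > 0"
    and "\<And>s. s \<ge> 1 \<Longrightarrow> \<beta> (s + 1) \<le> \<beta> s"
    and "t \<ge> 1"
  shows "{x::real. \<forall>y::real.
            gauss_expect (sqrt (pi / 2)) (\<lambda>\<phi>. ft a \<beta> (t + 1) (y + \<phi> * G)) - ft a \<beta> t y
          \<le> gauss_expect (sqrt (pi / 2)) (\<lambda>\<phi>. ft a \<beta> (t + 1) (x + \<phi> * G)) - ft a \<beta> t x}
         = {0}"
proof -
  define T where "T = real t"
  define P where "P = pi * G^2"
  define m where "m = 2*a*(T+1)"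
  define c where "c = 1/m"
  define q where "q = 1/pi - c*G^2"
  define e where "e = c + c^2*G^2/q"
  define K where "K = 1/sqrt(pi*q)"
  define d where "d = 1/(2*a*T)"
  have T1: "T \<ge> 1" using assms(5) by (simp add: T_def)
  have P0: "P > 0" using assms(1) by (simp add: P_def)
  have aP: "a \<ge> 3*P/4" using assms(2) by (simp add: P_def)
  have a0: "a > 0" using aP P0 by simp
  have m0: "m > 0" using a0 T1 by (simp add: m_def)
  have mP: "m - P > 2*a*T" using aP P0 T1 by (simp add: m_def algebra_simps)
  have aT: "2*a*T > 0" using a0 T1 by simp
  have mP0: "m - P > 0" using mP aT by linarith
  have q_eq: "q = (m-P)/(pi*m)" using m0 by (simp add: q_def c_def P_def field_simps)
  have q0: "q > 0" unfolding q_eq using mP0 m0 by simp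
  have c0: "c > 0" using m0 by (simp add: c_def)
  have e_eq: "e = 1/(m-P)"
  proof -
    have "e = c*(q + c*G^2)/q" using q0 by (simp add: e_def field_simps power2_eq_square)
    also have "q + c*G^2 = 1/pi" by (simp add: q_def)
    finally have "e = c/(pi*q)" by simp
    also have "pi*q = (m-P)/m" using m0 by (simp add: q_eq)
    finally show ?thesis using m0 mP0 by (simp add: c_def)
  qed
  have e0: "e > 0" using mP0 by (simp add: e_eq)
  have ed: "e < d" unfolding e_eq d_def using mP aT by (simp add: frac_less2)
  have K0: "K > 0" using q0 by (simp add: K_def)
  have Ked: "K*e \<le> d"
  proof -
    have K2: "K^2 = m/(m-P)" using q0 m0 mP0
      by (simp add: K_def power_divide q_eq)
    have ki: "m*(2*a*T)^2 \<le> (m-P)^3"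
      using key_ineq[OF T1 P0, of "2*a"] aP by (simp add: m_def)
    have "(K*e)^2 = K^2 * e^2" by (simp add: power_mult_distrib)
    also have "\<dots> = m/(m-P) * (1/(m-P)^2)" by (simp only: K2 e_eq power_divide) simp
    also have "\<dots> = m/(m-P)^3" using mP0 by (simp add: power3_eq_cube power2_eq_square)
    finally have "(K*e)^2 = m/(m-P)^3" .
    also have "\<dots> \<le> 1/(2*a*T)^2"
    proof -
      have X: "(m-P)^3 > 0" "(2*a*T)^2 > 0" using mP0 aT by auto
      have "\<And>X Y::real. X > 0 \<Longrightarrow> Y > 0 \<Longrightarrow> m*Y \<le> X \<Longrightarrow> m/X \<le> 1/Y"
        by (simp add: field_simps)
      from this[OF X ki] show ?thesis .
    qed
    also have "\<dots> = d^2" by (simp add: d_def power_divide)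
    finally have "(K*e)^2 \<le> d^2" .
    moreover have "d \<ge> 0" using aT by (simp add: d_def)
    ultimately show ?thesis by (rule power2_le_imp_le)
  qed
  define A where "A = \<beta> (t+1) * K"
  define B where "B = \<beta> t"
  have b1: "\<beta> (t+1) > 0" "\<beta> t > 0" "\<beta> (t+1) \<le> \<beta> t" using assms(3,4,5) by auto
  have A0: "A > 0" using b1 K0 by (simp add: A_def)
  have AeBd: "A*e \<le> B*d"
  proof -
    have "A*e = \<beta> (t+1) * (K*e)" by (simp add: A_def)
    also have "\<dots> \<le> \<beta> t * (K*e)" using b1 K0 e0 by (simp add: mult_right_mono)
    also have "\<dots> \<le> \<beta> t * d" using b1 Ked by (simp add: mult_left_mono)
    finally show ?thesis by (simp add: B_def)
  qed
  define g where "g y = A*exp(e*y^2) - B*exp(d*y^2)" for y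
  have gE: "gauss_expect (sqrt (pi / 2)) (\<lambda>\<phi>. ft a \<beta> (t + 1) (y + \<phi> * G)) - ft a \<beta> t y = g y" for y
  proof -
    have "(\<lambda>\<phi>. ft a \<beta> (t + 1) (y + \<phi> * G)) = (\<lambda>\<phi>. \<beta> (t+1) * exp (c*(y+\<phi>*G)^2))"
      by (simp add: ft_def c_def m_def T_def add.commute)
    then have "gauss_expect (sqrt (pi / 2)) (\<lambda>\<phi>. ft a \<beta> (t + 1) (y + \<phi> * G))
       = \<beta> (t+1) * gauss_expect (sqrt (pi / 2)) (\<lambda>\<phi>. exp (c*(y+\<phi>*G)^2))"
      by (simp add: gauss_expect_def)
    also have "\<dots> = A * exp (e*y^2)"
      using gauss_closed[OF c0 q_def q0] by (simp add: A_def K_def e_def)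
    finally show ?thesis
      by (simp add: g_def ft_def B_def d_def T_def)
  qed
  have gle: "g y < g 0" if "y \<noteq> 0" for y
    using exp_dec[OF e0 ed A0 AeBd, of "y^2"] that by (simp add: g_def)
  show ?thesis
  proof (rule set_eqI, simp only: gE mem_Collect_eq singleton_iff)
    fix x :: real
    show "(\<forall>y. g y \<le> g x) = (x = 0)"
      using gle by (metis less_le_not_le order_refl)
  qed
qed

end
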